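(* For every graph $G$, $pw(G) \leq 2\, mw(G)$, where $pw(G)$ is the pathwidth and $mw(G)$ the matching width of $G$.
   Context: For a permutation $SV=(v_1,\dots,v_n)$ of $V(G)$ and $1\le i\le n$, let $V_i=\{v_1,\dots,v_i\}$ and let $G_i$ be the graph on $V(G)$ whose edges are the edges of $G$ with one end in $V_i$ and the other in $V(G)\setminus V_i$. The matching width of $SV$ is $\max_i \nu(G_i)$, where $\nu$ denotes maximum matching size, and the matching width $mw(G)$ is the minimum of this quantity over all permutations $SV$ of $V(G)$. Pathwidth is the standard notion. *)

theory Defs
  imports Main
begin

definition graph :: "'a set \<Rightarrow> 'a set set \<Rightarrow> bool" where
  "graph V E \<longleftrightarrow> finite V \<and> (\<forall>e\<in>E. \<exists>u v. e = {u, v} \<and> u \<noteq> v \<and> u \<in> V \<and> v \<in> V)"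

definition matching :: "'a set set \<Rightarrow> bool" where
  "matching M \<longleftrightarrow> (\<forall>e\<in>M. \<forall>f\<in>M. e \<noteq> f \<longrightarrow> e \<inter> f = {})"

definition matching_number :: "'a set set \<Rightarrow> nat" where
  "matching_number E = Max {card M | M. M \<subseteq> E \<and> matching M}"

definition cut_edges :: "'a set set \<Rightarrow> 'a set \<Rightarrow> 'a set set" where
  "cut_edges E S = {e \<in> E. e \<inter> S \<noteq> {} \<and> e - S \<noteq> {}}"

text \<open>Matching width of a vertex ordering vs = (v_1,...,v_n); i = 0 adds only the
  trivial value 0, so this equals the maximum over 1 <= i <= n.\<close>
definition mw_order :: "'a set set \<Rightarrow> 'a list \<Rightarrow> nat" where
  "mw_order E vs = Max {matching_number (cut_edges E (set (take i vs))) | i. i \<le> length vs}"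

definition vertex_orderings :: "'a set \<Rightarrow> 'a list set" where
  "vertex_orderings V = {vs. distinct vs \<and> set vs = V}"

definition matching_width :: "'a set \<Rightarrow> 'a set set \<Rightarrow> nat" where
  "matching_width V E = Min (mw_order E ` vertex_orderings V)"

definition path_decomposition :: "'a set \<Rightarrow> 'a set set \<Rightarrow> 'a set list \<Rightarrow> bool" where
  "path_decomposition V E P \<longleftrightarrow>
     (\<forall>B\<in>set P. B \<subseteq> V) \<and> \<Union>(set P) = V \<and>
     (\<forall>e\<in>E. \<exists>B\<in>set P. e \<subseteq> B) \<and>
     (\<forall>v i j k. i \<le> j \<and> j \<le> k \<and> k < length P \<and> v \<in> P ! i \<and> v \<in> P ! k \<longrightarrow> v \<in> P ! j)"

definition pathwidth :: "'a set \<Rightarrow> 'a set set \<Rightarrow> int" where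
  "pathwidth V E = int (LEAST k. \<exists>P. path_decomposition V E P \<and> (\<forall>B\<in>set P. card B \<le> k)) - 1"

end

theory Submission imports Defs begin

lemma ext_exists:
  "finite C \<Longrightarrow> \<forall>e\<in>C. e \<noteq> {} \<Longrightarrow> M0 \<subseteq> C \<Longrightarrow> matching M0 \<Longrightarrow>
   \<exists>M. M0 \<subseteq> M \<and> M \<subseteq> C \<and> matching M \<and> (\<forall>e\<in>C. e \<inter> \<Union>M \<noteq> {})"
proof (induction "card (C - M0)" arbitrary: M0 rule: less_induct)
  case less
  show ?case
  proof (cases "\<forall>e\<in>C. e \<inter> \<Union>M0 \<noteq> {}")
    case True thus ?thesis using less.prems by blast
  next
    case False
    then obtain e where e: "e\<in>C" "e \<inter> \<Union>M0 = {}" by blast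
    have ne: "e \<notin> M0" using e less.prems(2) by blast
    have m: "matching (insert e M0)" using less.prems(4) e unfolding matching_def by blast
    have "card (C - insert e M0) < card (C - M0)"
      using e ne less.prems(1) by (intro psubset_card_mono) auto
    have "insert e M0 \<subseteq> C" using e less.prems(3) by blast
    from less.hyps[OF \<open>card (C - insert e M0) < card (C - M0)\<close> less.prems(1,2) this m]
    obtain M where "insert e M0 \<subseteq> M" "M \<subseteq> C" "matching M" "\<forall>e\<in>C. e \<inter> \<Union>M \<noteq> {}" by blast
    thus ?thesis by blast
  qed
qed

definition ok :: "'a set set \<Rightarrow> 'a set \<Rightarrow> 'a set set \<Rightarrow> bool" where
  "ok E S M \<longleftrightarrow> M \<subseteq> cut_edges E S \<and> matching M \<and> (\<forall>e\<in>cut_edges E S. e \<inter> \<Union>M \<noteq> {})"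

primrec Ms :: "'a set set \<Rightarrow> 'a list \<Rightarrow> nat \<Rightarrow> 'a set set" where
  "Ms E vs 0 = {}"
| "Ms E vs (Suc t) = (SOME M. {e \<in> Ms E vs t. vs!t \<notin> e} \<subseteq> M \<and> ok E (set (take (Suc t) vs)) M)"

lemma card_UN_le1:
  assumes "finite M" "\<forall>e\<in>M. card (f e) \<le> 1"
  shows "card (\<Union>e\<in>M. f e) \<le> card M"
proof -
  have "card (\<Union>e\<in>M. f e) \<le> (\<Sum>e\<in>M. card (f e))" using assms(1) by (rule card_UN_le)
  also have "\<dots> \<le> card M * 1" using sum_bounded_above[of M "\<lambda>e. card (f e)" 1] assms(2) by auto
  finally show ?thesis by simp
qed

definition bag :: "'a set set \<Rightarrow> 'a list \<Rightarrow> nat \<Rightarrow> 'a set" where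
  "bag E vs p = insert (vs!p) ((\<Union>(Ms E vs p) \<inter> set (take p vs)) \<union> (\<Union>(Ms E vs (Suc p)) - set (take (Suc p) vs)))"

context
  fixes V :: "'a set" and E :: "'a set set" and vs :: "'a list"
  assumes g: "graph V E" and d: "distinct vs" and sv: "set vs = V"
begin

lemma finE: "finite E"
proof -
  have "E \<subseteq> Pow V"
  proof
    fix e assume "e \<in> E"
    then obtain u w where "e = {u, w}" "u \<in> V" "w \<in> V" using g unfolding graph_def by meson
    thus "e \<in> Pow V" by simp
  qed
  moreover have "finite V" using g unfolding graph_def by blast
  ultimately show ?thesis using finite_subset[of E "Pow V"] by simp
qed

lemma edge2: "e \<in> E \<Longrightarrow> \<exists>u w. e = {u, w} \<and> u \<noteq> w \<and> u \<in> V \<and> w \<in> V"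
  using g unfolding graph_def by meson

lemma cut2: "e \<in> cut_edges E S \<Longrightarrow> \<exists>x y. e = {x, y} \<and> x \<in> S \<and> y \<notin> S \<and> e \<in> E"
proof -
  assume a: "e \<in> cut_edges E S"
  hence eE: "e \<in> E" and i: "e \<inter> S \<noteq> {}" and o: "e - S \<noteq> {}" unfolding cut_edges_def by auto
  from edge2[OF eE] obtain u w where uw: "e = {u, w}" by blast
  show ?thesis
  proof (cases "u \<in> S")
    case True
    hence "w \<notin> S" using o uw by auto
    thus ?thesis using True uw eE by blast
  next
    case False
    hence "w \<in> S" using i uw by auto
    thus ?thesis using False uw eE by (metis insert_commute)
  qed
qed

lemma idx:
  assumes j: "j < length vs"
  shows "(vs!j \<in> set (take t vs)) = (j < t)"
proof
  assume "vs!j \<in> set (take t vs)"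
  then obtain i where i: "i < length (take t vs)" "take t vs ! i = vs ! j" unfolding in_set_conv_nth by blast
  hence "vs ! i = vs ! j" "i < length vs" "i < t" by auto
  hence "i = j" using j by (simp add: nth_eq_iff_index_eq[OF d])
  thus "j < t" using \<open>i < t\<close> by simp
next
  assume "j < t"
  hence "take t vs ! j = vs ! j" "j < length (take t vs)" using j by auto
  thus "vs!j \<in> set (take t vs)" using nth_mem[of j "take t vs"] by simp
qed

lemma takeSuc: "t < length vs \<Longrightarrow> set (take (Suc t) vs) = insert (vs!t) (set (take t vs))"
  by (simp add: take_Suc_conv_app_nth)

lemma step_exists:
  assumes t: "t < length vs" and okt: "ok E (set (take t vs)) (Ms E vs t)"
  shows "\<exists>M. {e \<in> Ms E vs t. vs!t \<notin> e} \<subseteq> M \<and> ok E (set (take (Suc t) vs)) M"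
proof -
  let ?C = "cut_edges E (set (take (Suc t) vs))"
  let ?M0 = "{e \<in> Ms E vs t. vs!t \<notin> e}"
  have "finite ?C" using finE unfolding cut_edges_def by simp
  moreover have "\<forall>e\<in>?C. e \<noteq> {}" unfolding cut_edges_def by blast
  moreover have "?M0 \<subseteq> ?C"
  proof
    fix e assume e: "e \<in> ?M0"
    hence "e \<in> cut_edges E (set (take t vs))" "vs!t \<notin> e" using okt unfolding ok_def by auto
    thus "e \<in> ?C" unfolding takeSuc[OF t] cut_edges_def by auto
  qed
  moreover have "matching ?M0" using okt unfolding ok_def matching_def by auto
  ultimately obtain M where "?M0 \<subseteq> M" "M \<subseteq> ?C" "matching M" "\<forall>e\<in>?C. e \<inter> \<Union>M \<noteq> {}"
    using ext_exists[of ?C ?M0] by auto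
  thus ?thesis unfolding ok_def by auto
qed

lemma Ms_Suc:
  assumes t: "t < length vs" and okt: "ok E (set (take t vs)) (Ms E vs t)"
  shows "{e \<in> Ms E vs t. vs!t \<notin> e} \<subseteq> Ms E vs (Suc t) \<and> ok E (set (take (Suc t) vs)) (Ms E vs (Suc t))"
  using someI_ex[OF step_exists[OF assms]] by simp

lemma Ms_ok: "t \<le> length vs \<Longrightarrow> ok E (set (take t vs)) (Ms E vs t)"
proof (induction t)
  case 0
  then show ?case unfolding ok_def cut_edges_def matching_def by simp
next
  case (Suc t)
  then show ?case using Ms_Suc by simp
qed


declare Ms.simps(2)[simp del]

lemma Ms_E: "t \<le> length vs \<Longrightarrow> Ms E vs t \<subseteq> E"
  using Ms_ok[of t] unfolding ok_def cut_edges_def by auto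

lemma up:
  assumes tj: "Suc t \<le> j" and j: "j < length vs" and x: "vs!j \<in> \<Union>(Ms E vs t)"
  shows "vs!j \<in> \<Union>(Ms E vs (Suc t))"
proof -
  have t: "t < length vs" using tj j by simp
  have okt: "ok E (set (take t vs)) (Ms E vs t)" using Ms_ok t by simp
  obtain e where e: "e \<in> Ms E vs t" "vs!j \<in> e" using x by blast
  have "e \<in> cut_edges E (set (take t vs))" using e okt unfolding ok_def by auto
  then obtain a w where aw: "e = {a, w}" "a \<in> set (take t vs)" "w \<notin> set (take t vs)" using cut2 by blast
  have "vs!j \<notin> set (take t vs)" using idx[OF j, of t] tj by simp
  hence "vs!j = w" using aw e by auto
  have "vs!t \<notin> set (take t vs)" using idx[OF t, of t] by simp
  hence "vs!t \<noteq> a" using aw by auto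
  moreover have "vs!t \<noteq> vs!j" using tj j t by (simp add: nth_eq_iff_index_eq[OF d])
  ultimately have "vs!t \<notin> e" using aw \<open>vs!j = w\<close> by auto
  hence "e \<in> Ms E vs (Suc t)" using Ms_Suc[OF t okt] e by auto
  thus ?thesis using e by blast
qed

lemma down:
  assumes jt: "j < t" and t: "t < length vs" and x: "vs!j \<in> \<Union>(Ms E vs (Suc t))"
  shows "vs!j \<in> \<Union>(Ms E vs t)"
proof (rule ccontr)
  assume nx: "vs!j \<notin> \<Union>(Ms E vs t)"
  have j: "j < length vs" using jt t by simp
  let ?S = "set (take t vs)" and ?S' = "set (take (Suc t) vs)"
  let ?M0 = "{e \<in> Ms E vs t. vs!t \<notin> e}"
  have okt: "ok E ?S (Ms E vs t)" using Ms_ok t by simp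
  have sub: "?M0 \<subseteq> Ms E vs (Suc t)" and ok1: "ok E ?S' (Ms E vs (Suc t))" using Ms_Suc[OF t okt] by auto
  obtain e where e: "e \<in> Ms E vs (Suc t)" "vs!j \<in> e" using x by blast
  have "e \<notin> ?M0" using e nx by blast
  have disj: "\<forall>f\<in>?M0. e \<inter> f = {}"
  proof
    fix f assume f: "f \<in> ?M0"
    hence "f \<in> Ms E vs (Suc t)" "e \<noteq> f" using sub \<open>e \<notin> ?M0\<close> by auto
    thus "e \<inter> f = {}" using e ok1 unfolding ok_def matching_def by blast
  qed
  have "e \<in> cut_edges E ?S'" using e ok1 unfolding ok_def by auto
  then obtain a w where aw: "e = {a, w}" "a \<in> ?S'" "w \<notin> ?S'" "e \<in> E" using cut2 by blast
  have xS: "vs!j \<in> ?S" using idx[OF j, of t] jt by simp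
  have SS: "?S' = insert (vs!t) ?S" using takeSuc[OF t] .
  have "w \<notin> ?S" using aw SS by auto
  have "vs!j \<noteq> w" using xS aw SS by auto
  have "e \<in> cut_edges E ?S" unfolding cut_edges_def using aw(1,4) xS \<open>w \<notin> ?S\<close> e(2) by auto
  hence "e \<inter> \<Union>(Ms E vs t) \<noteq> {}" using okt unfolding ok_def by auto
  then obtain z f where zf: "z \<in> e" "z \<in> f" "f \<in> Ms E vs t" by blast
  have "z \<noteq> vs!j" using zf nx by blast
  hence "z = w" using zf aw e(2) \<open>vs!j \<noteq> w\<close> by auto
  have "f \<in> cut_edges E ?S" using zf okt unfolding ok_def by auto
  then obtain c dd where cd: "f = {c, dd}" "c \<in> ?S" "dd \<notin> ?S" using cut2 by blast
  have "vs!t \<notin> ?S" using idx[OF t, of t] by simp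
  hence "vs!t \<noteq> c" using cd by auto
  have "w \<noteq> c" using cd \<open>w \<notin> ?S\<close> by auto
  hence "w = dd" using zf cd \<open>z = w\<close> by auto
  have "vs!t \<noteq> w" using aw SS by auto
  hence "vs!t \<notin> f" using cd \<open>vs!t \<noteq> c\<close> \<open>w = dd\<close> by auto
  hence "f \<in> ?M0" using zf by auto
  thus False using disj zf \<open>z = w\<close> aw by auto
qed

lemma bag_mem:
  assumes j: "j < length vs" and p: "p < length vs"
  shows "(vs!j \<in> bag E vs p) = (p = j \<or> (j < p \<and> vs!j \<in> \<Union>(Ms E vs p)) \<or> (p < j \<and> vs!j \<in> \<Union>(Ms E vs (Suc p))))"
  using idx[OF j, of p] idx[OF j, of "Suc p"] j p unfolding bag_def
  by (auto simp add: nth_eq_iff_index_eq[OF d])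


lemma finite_Ms: "t \<le> length vs \<Longrightarrow> finite (Ms E vs t)"
  using Ms_E finE finite_subset by blast

lemma edge_sub: "e \<in> E \<Longrightarrow> e \<subseteq> V \<and> finite e"
proof -
  assume "e \<in> E"
  from edge2[OF this] obtain u w where "e = {u, w}" "u \<in> V" "w \<in> V" by blast
  thus ?thesis by simp
qed

lemma U_sub: "t \<le> length vs \<Longrightarrow> \<Union>(Ms E vs t) \<subseteq> V \<and> finite (\<Union>(Ms E vs t))"
proof -
  assume t: "t \<le> length vs"
  have "\<Union>(Ms E vs t) \<subseteq> V" using Ms_E[OF t] edge_sub by blast
  moreover have "finite (\<Union>(Ms E vs t))"
    using Ms_E[OF t] edge_sub finite_Ms[OF t] by (intro finite_Union) auto
  ultimately show ?thesis by simp
qed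

lemma card_Ms: "t \<le> length vs \<Longrightarrow> card (Ms E vs t) \<le> mw_order E vs"
proof -
  assume t: "t \<le> length vs"
  let ?C = "cut_edges E (set (take t vs))"
  have fC: "finite ?C" using finE unfolding cut_edges_def by simp
  have "{card M | M. M \<subseteq> ?C \<and> matching M} \<subseteq> card ` Pow ?C" by auto
  hence "finite {card M | M. M \<subseteq> ?C \<and> matching M}" using fC finite_subset by blast
  moreover have "card (Ms E vs t) \<in> {card M | M. M \<subseteq> ?C \<and> matching M}"
    using Ms_ok[OF t] unfolding ok_def by blast
  ultimately have 1: "card (Ms E vs t) \<le> matching_number ?C"
    unfolding matching_number_def by (rule Max_ge)
  have "{matching_number (cut_edges E (set (take i vs))) | i. i \<le> length vs}
        \<subseteq> (\<lambda>i. matching_number (cut_edges E (set (take i vs)))) ` {..length vs}" by auto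
  hence "finite {matching_number (cut_edges E (set (take i vs))) | i. i \<le> length vs}"
    using finite_subset by blast
  moreover have "matching_number ?C \<in> {matching_number (cut_edges E (set (take i vs))) | i. i \<le> length vs}"
    using t by blast
  ultimately have "matching_number ?C \<le> mw_order E vs" unfolding mw_order_def by (rule Max_ge)
  thus ?thesis using 1 by simp
qed

lemma card_half:
  assumes t: "t \<le> length vs"
  shows "card (\<Union>(Ms E vs t) \<inter> set (take t vs)) \<le> card (Ms E vs t)"
    and "card (\<Union>(Ms E vs t) - set (take t vs)) \<le> card (Ms E vs t)"
proof -
  let ?S = "set (take t vs)"
  have cut: "\<And>e. e \<in> Ms E vs t \<Longrightarrow> e \<in> cut_edges E ?S" using Ms_ok[OF t] unfolding ok_def by auto
  have "\<forall>e\<in>Ms E vs t. card (e \<inter> ?S) \<le> 1"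
  proof
    fix e assume "e \<in> Ms E vs t"
    hence "e \<in> cut_edges E ?S" by (rule cut)
    then obtain a w where "e = {a, w}" "a \<in> ?S" "w \<notin> ?S" using cut2 by blast
    hence "e \<inter> ?S = {a}" by auto
    thus "card (e \<inter> ?S) \<le> 1" by simp
  qed
  from card_UN_le1[OF finite_Ms[OF t] this]
  have "card (\<Union>e\<in>Ms E vs t. e \<inter> ?S) \<le> card (Ms E vs t)" .
  moreover have "\<Union>(Ms E vs t) \<inter> ?S = (\<Union>e\<in>Ms E vs t. e \<inter> ?S)" by blast
  ultimately show "card (\<Union>(Ms E vs t) \<inter> ?S) \<le> card (Ms E vs t)" by (simp only:)
  have "\<forall>e\<in>Ms E vs t. card (e - ?S) \<le> 1"
  proof
    fix e assume "e \<in> Ms E vs t"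
    hence "e \<in> cut_edges E ?S" by (rule cut)
    then obtain a w where "e = {a, w}" "a \<in> ?S" "w \<notin> ?S" using cut2 by blast
    hence "e - ?S = {w}" by auto
    thus "card (e - ?S) \<le> 1" by simp
  qed
  from card_UN_le1[OF finite_Ms[OF t] this]
  have "card (\<Union>e\<in>Ms E vs t. e - ?S) \<le> card (Ms E vs t)" .
  moreover have "\<Union>(Ms E vs t) - ?S = (\<Union>e\<in>Ms E vs t. e - ?S)" by blast
  ultimately show "card (\<Union>(Ms E vs t) - ?S) \<le> card (Ms E vs t)" by (simp only:)
qed

lemma card_bag:
  assumes p: "p < length vs"
  shows "card (bag E vs p) \<le> 2 * mw_order E vs + 1"
proof -
  let ?A = "\<Union>(Ms E vs p) \<inter> set (take p vs)" and ?B = "\<Union>(Ms E vs (Suc p)) - set (take (Suc p) vs)"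
  have fA: "finite ?A" and fB: "finite ?B" using U_sub[of p] U_sub[of "Suc p"] p by auto
  have "card (bag E vs p) \<le> Suc (card (?A \<union> ?B))"
    unfolding bag_def using fA fB by (simp add: card_insert_if)
  also have "\<dots> \<le> Suc (card ?A + card ?B)" using card_Un_le[of ?A ?B] by simp
  also have "\<dots> \<le> Suc (card (Ms E vs p) + card (Ms E vs (Suc p)))"
    using card_half(1)[of p] card_half(2)[of "Suc p"] p by simp
  also have "\<dots> \<le> 2 * mw_order E vs + 1" using card_Ms[of p] card_Ms[of "Suc p"] p by simp
  finally show ?thesis .
qed

lemma bag_sub: "p < length vs \<Longrightarrow> bag E vs p \<subseteq> V"
  using U_sub[of p] U_sub[of "Suc p"] sv unfolding bag_def by auto

lemma edge_cov:
  assumes ab: "a < b" and b: "b < length vs" and eE: "{vs!a, vs!b} \<in> E"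
  shows "\<exists>p<length vs. vs!a \<in> bag E vs p \<and> vs!b \<in> bag E vs p"
proof -
  have a: "a < length vs" using ab b by simp
  have cov: "vs!a \<in> \<Union>(Ms E vs t) \<or> vs!b \<in> \<Union>(Ms E vs t)" if "a < t" "t \<le> b" for t
  proof -
    have "{vs!a, vs!b} \<in> cut_edges E (set (take t vs))"
      unfolding cut_edges_def using eE idx[OF a, of t] idx[OF b, of t] that by auto
    hence "{vs!a, vs!b} \<inter> \<Union>(Ms E vs t) \<noteq> {}" using Ms_ok[of t] that b unfolding ok_def by auto
    thus ?thesis by auto
  qed
  have main: "Suc a \<le> t \<longrightarrow> t \<le> b \<longrightarrow> (\<exists>p<length vs. vs!a \<in> bag E vs p \<and> vs!b \<in> bag E vs p) \<or> vs!a \<in> \<Union>(Ms E vs t)" for t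
  proof (induction t)
    case 0 thus ?case by simp
  next
    case (Suc t)
    show ?case
    proof (intro impI)
      assume h: "Suc a \<le> Suc t" "Suc t \<le> b"
      show "(\<exists>p<length vs. vs!a \<in> bag E vs p \<and> vs!b \<in> bag E vs p) \<or> vs!a \<in> \<Union>(Ms E vs (Suc t))"
      proof (cases "vs!a \<in> \<Union>(Ms E vs (Suc t))")
        case True thus ?thesis by simp
      next
        case False
        hence yb: "vs!b \<in> \<Union>(Ms E vs (Suc t))" using cov[of "Suc t"] h by auto
        show ?thesis
        proof (cases "t = a")
          case True
          hence "vs!a \<in> bag E vs a \<and> vs!b \<in> bag E vs a"
            using bag_mem[OF a a] bag_mem[OF b a] ab yb by auto
          thus ?thesis using a by blast
        next
          case False
          hence "Suc a \<le> t" "t \<le> b" using h by auto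
          hence "(\<exists>p<length vs. vs!a \<in> bag E vs p \<and> vs!b \<in> bag E vs p) \<or> vs!a \<in> \<Union>(Ms E vs t)"
            using Suc.IH by simp
          moreover have "t < length vs" using h b by simp
          moreover have "a < t" "t < b" using \<open>Suc a \<le> t\<close> h by auto
          ultimately show ?thesis using bag_mem[OF a, of t] bag_mem[OF b, of t] yb by blast
        qed
      qed
    qed
  qed
  have "(\<exists>p<length vs. vs!a \<in> bag E vs p \<and> vs!b \<in> bag E vs p) \<or> vs!a \<in> \<Union>(Ms E vs b)"
    using main[of b] ab by simp
  moreover have "vs!a \<in> \<Union>(Ms E vs b) \<Longrightarrow> vs!a \<in> bag E vs b \<and> vs!b \<in> bag E vs b"
    using bag_mem[OF a b] bag_mem[OF b b] ab by auto
  ultimately show ?thesis using b by blast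
qed

lemma contig:
  assumes im: "i \<le> m" and mq: "m \<le> q" and q: "q < length vs" and j: "j < length vs"
    and xi: "vs!j \<in> bag E vs i" and xq: "vs!j \<in> bag E vs q"
  shows "vs!j \<in> bag E vs m"
proof -
  have m: "m < length vs" using mq q by simp
  have i: "i < length vs" using im m by simp
  consider "m = j" | "j < m" | "m < j" by linarith
  thus ?thesis
  proof cases
    case 1 thus ?thesis using bag_mem[OF j m] by simp
  next
    case 2
    have xU: "vs!j \<in> \<Union>(Ms E vs q)" using bag_mem[OF j q] xq 2 mq by auto
    have "m \<le> r \<longrightarrow> r \<le> q \<longrightarrow> vs!j \<in> \<Union>(Ms E vs r) \<longrightarrow> vs!j \<in> \<Union>(Ms E vs m)" for r
    proof (induction r)
      case 0 thus ?case by simp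
    next
      case (Suc r)
      show ?case
      proof (intro impI)
        assume h: "m \<le> Suc r" "Suc r \<le> q" "vs!j \<in> \<Union>(Ms E vs (Suc r))"
        show "vs!j \<in> \<Union>(Ms E vs m)"
        proof (cases "Suc r = m")
          case True thus ?thesis using h by simp
        next
          case False
          hence "m \<le> r" using h by simp
          moreover have "vs!j \<in> \<Union>(Ms E vs r)" using down[of j r] h 2 q \<open>m \<le> r\<close> by simp
          ultimately show ?thesis using Suc.IH h by simp
        qed
      qed
    qed
    hence "vs!j \<in> \<Union>(Ms E vs m)" using xU mq by simp
    thus ?thesis using bag_mem[OF j m] 2 by simp
  next
    case 3
    have xU: "vs!j \<in> \<Union>(Ms E vs (Suc i))" using bag_mem[OF j i] xi 3 im by auto
    have "i \<le> r \<longrightarrow> r \<le> m \<longrightarrow> vs!j \<in> \<Union>(Ms E vs (Suc r))" for r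
    proof (induction r)
      case 0
      show ?case
      proof (intro impI)
        assume "i \<le> 0"
        hence "Suc 0 = Suc i" by simp
        thus "vs!j \<in> \<Union>(Ms E vs (Suc 0))" using xU by (simp only:)
      qed
    next
      case (Suc r)
      show ?case
      proof (intro impI)
        assume h: "i \<le> Suc r" "Suc r \<le> m"
        show "vs!j \<in> \<Union>(Ms E vs (Suc (Suc r)))"
        proof (cases "i = Suc r")
          case True thus ?thesis using xU by simp
        next
          case False
          hence "vs!j \<in> \<Union>(Ms E vs (Suc r))" using Suc.IH h by simp
          thus ?thesis using up[of "Suc r" j] h 3 j by simp
        qed
      qed
    qed
    hence "vs!j \<in> \<Union>(Ms E vs (Suc m))" using im by simp
    thus ?thesis using bag_mem[OF j m] 3 by simp
  qed
qed

lemma pd: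
  "path_decomposition V E (map (bag E vs) [0..<length vs]) \<and>
   (\<forall>B\<in>set (map (bag E vs) [0..<length vs]). card B \<le> 2 * mw_order E vs + 1)"
proof -
  let ?P = "map (bag E vs) [0..<length vs]"
  have setP: "set ?P = bag E vs ` {..<length vs}" by auto
  have c1: "\<forall>B\<in>set ?P. B \<subseteq> V" using bag_sub setP by auto
  have c2: "\<Union>(set ?P) = V"
  proof
    show "\<Union>(set ?P) \<subseteq> V" using c1 by blast
    show "V \<subseteq> \<Union>(set ?P)"
    proof
      fix v assume "v \<in> V"
      then obtain p where p: "p < length vs" "vs!p = v" using sv by (metis in_set_conv_nth)
      hence "v \<in> bag E vs p" unfolding bag_def by simp
      thus "v \<in> \<Union>(set ?P)" using p setP by blast
    qed
  qed
  have c3: "\<forall>e\<in>E. \<exists>B\<in>set ?P. e \<subseteq> B"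
  proof
    fix e assume eE: "e \<in> E"
    from edge2[OF eE] obtain u w where uw: "e = {u, w}" "u \<noteq> w" "u \<in> V" "w \<in> V" by blast
    obtain a where a: "a < length vs" "vs!a = u" using uw sv by (metis in_set_conv_nth)
    obtain b where b: "b < length vs" "vs!b = w" using uw sv by (metis in_set_conv_nth)
    have "a \<noteq> b" using a b uw by auto
    hence "\<exists>p<length vs. u \<in> bag E vs p \<and> w \<in> bag E vs p"
    proof (cases "a < b")
      case True thus ?thesis using edge_cov[of a b] a b uw eE by simp
    next
      case False
      hence "b < a" using \<open>a \<noteq> b\<close> by simp
      moreover have "{vs!b, vs!a} \<in> E" using eE uw a b by (simp add: insert_commute)
      ultimately show ?thesis using edge_cov[of b a] a b by auto
    qed
    thus "\<exists>B\<in>set ?P. e \<subseteq> B" using uw setP by blast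
  qed
  have c4: "\<forall>v i j k. i \<le> j \<and> j \<le> k \<and> k < length ?P \<and> v \<in> ?P ! i \<and> v \<in> ?P ! k \<longrightarrow> v \<in> ?P ! j"
  proof (intro allI impI)
    fix v i m k assume h: "i \<le> m \<and> m \<le> k \<and> k < length ?P \<and> v \<in> ?P ! i \<and> v \<in> ?P ! k"
    hence k: "k < length vs" and i: "i < length vs" and m: "m < length vs" by auto
    have vi: "v \<in> bag E vs i" and vk: "v \<in> bag E vs k" using h i k by auto
    have "v \<in> V" using vi bag_sub i by auto
    then obtain j where j: "j < length vs" "vs!j = v" using sv by (metis in_set_conv_nth)
    have "v \<in> bag E vs m" using contig[of i m k j] h k j vi vk by simp
    thus "v \<in> ?P ! m" using m by simp
  qed
  have c5: "\<forall>B\<in>set ?P. card B \<le> 2 * mw_order E vs + 1" using card_bag by auto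
  show ?thesis unfolding path_decomposition_def using c1 c2 c3 c4 c5 by blast
qed

end

lemma finite_orderings: "finite V \<Longrightarrow> finite (vertex_orderings V)"
proof -
  assume f: "finite V"
  have "vertex_orderings V \<subseteq> {xs. set xs \<subseteq> V \<and> length xs \<le> card V}"
    unfolding vertex_orderings_def using distinct_card by fastforce
  thus ?thesis using finite_lists_length_le[OF f, of "card V"] finite_subset by blast
qed

theorem theorem7:
  fixes V :: "'a set" and E :: "'a set set"
  assumes "graph V E"
  shows "pathwidth V E \<le> 2 * int (matching_width V E)"
proof -
  have fV: "finite V" using assms unfolding graph_def by blast
  obtain xs where "set xs = V" "distinct xs" using finite_distinct_list[OF fV] by blast
  hence ne: "vertex_orderings V \<noteq> {}" unfolding vertex_orderings_def by blast
  have "matching_width V E \<in> mw_order E ` vertex_orderings V"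
    unfolding matching_width_def using finite_orderings[OF fV] ne by (intro Min_in) auto
  then obtain vs where vs: "vs \<in> vertex_orderings V" "mw_order E vs = matching_width V E" by auto
  hence d: "distinct vs" and sv: "set vs = V" unfolding vertex_orderings_def by auto
  have "\<exists>P. path_decomposition V E P \<and> (\<forall>B\<in>set P. card B \<le> 2 * mw_order E vs + 1)"
    using pd[OF assms d sv] by blast
  hence "(LEAST k. \<exists>P. path_decomposition V E P \<and> (\<forall>B\<in>set P. card B \<le> k)) \<le> 2 * mw_order E vs + 1"
    by (rule Least_le)
  thus ?thesis unfolding pathwidth_def using vs(2) by simp
qed

end
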